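(* Let $\beta,\gamma,\mu>0$, $0<p<\tfrac12$, $\delta=\beta/(\gamma+\mu)$ with $4(1-p)<\delta<\tfrac1p$. Then the Jacobian at $E_2$ of the $(S_0,S_1,A)$ subsystem of the temporary adoption model, $$J=\begin{pmatrix}-\beta A-\mu&0&-\beta S_0\\(1-p)\beta A&-\beta A-\mu&(1-p)\beta S_0-\beta S_1\\ p\beta A&\beta A&\beta(pS_0+S_1)-\gamma-\mu\end{pmatrix},$$ has exactly one eigenvalue with positive real part (which is real) and two eigenvalues with negative real part. In particular $E_2$ is a hyperbolic saddle with a one-dimensional unstable manifold.
   Context: The temporary adoption model is $S_0'=\mu-\beta S_0A-\mu S_0$, $S_1'=(1-p)\beta S_0A-\beta S_1A-\mu S_1$, $A'=\beta(pS_0+S_1)A-(\gamma+\mu)A$, $R'=\gamma A-\mu R$, with $S_0+S_1+A+R=1$. $E_2$ is the equilibrium with $A=A_2=\tfrac12(1+\tfrac{\gamma}{\mu})^{-1}\big[1-2\delta^{-1}-\sqrt{1-4(1-p)\delta^{-1}}\big]$, $S_0=1/(\delta(\frac{\gamma}{\mu}+1)A+1)$, $S_1=(1-p)\delta(\frac{\gamma}{\mu}+1)A/(\delta(\frac{\gamma}{\mu}+1)A+1)^2$, $R=\frac{\gamma}{\mu}A$. *)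

theory Defs
  imports Complex_Main "Jordan_Normal_Form.Char_Poly"
begin

definition tam_delta :: "real \<Rightarrow> real \<Rightarrow> real \<Rightarrow> real" where
  "tam_delta \<beta> \<gamma> \<mu> = \<beta> / (\<gamma> + \<mu>)"

definition E2_A :: "real \<Rightarrow> real \<Rightarrow> real \<Rightarrow> real \<Rightarrow> real" where
  "E2_A \<beta> \<gamma> \<mu> p = (let \<delta> = tam_delta \<beta> \<gamma> \<mu> in
     (1/2) * inverse (1 + \<gamma>/\<mu>) * (1 - 2 / \<delta> - sqrt (1 - 4 * (1 - p) / \<delta>)))"

definition E2_S0 :: "real \<Rightarrow> real \<Rightarrow> real \<Rightarrow> real \<Rightarrow> real" where
  "E2_S0 \<beta> \<gamma> \<mu> p = (let \<delta> = tam_delta \<beta> \<gamma> \<mu>; A = E2_A \<beta> \<gamma> \<mu> p in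
     1 / (\<delta> * (\<gamma>/\<mu> + 1) * A + 1))"

definition E2_S1 :: "real \<Rightarrow> real \<Rightarrow> real \<Rightarrow> real \<Rightarrow> real" where
  "E2_S1 \<beta> \<gamma> \<mu> p = (let \<delta> = tam_delta \<beta> \<gamma> \<mu>; A = E2_A \<beta> \<gamma> \<mu> p in
     (1 - p) * \<delta> * (\<gamma>/\<mu> + 1) * A / (\<delta> * (\<gamma>/\<mu> + 1) * A + 1)^2)"

definition tam_jacobian :: "real \<Rightarrow> real \<Rightarrow> real \<Rightarrow> real \<Rightarrow> real \<Rightarrow> real \<Rightarrow> real \<Rightarrow> real mat" where
  "tam_jacobian \<beta> \<gamma> \<mu> p S0 S1 A = mat_of_rows_list 3
     [[- \<beta> * A - \<mu>, 0, - \<beta> * S0],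
      [(1 - p) * \<beta> * A, - \<beta> * A - \<mu>, (1 - p) * \<beta> * S0 - \<beta> * S1],
      [p * \<beta> * A, \<beta> * A, \<beta> * (p * S0 + S1) - \<gamma> - \<mu>]]"

definition J_E2 :: "real \<Rightarrow> real \<Rightarrow> real \<Rightarrow> real \<Rightarrow> real mat" where
  "J_E2 \<beta> \<gamma> \<mu> p = tam_jacobian \<beta> \<gamma> \<mu> p (E2_S0 \<beta> \<gamma> \<mu> p) (E2_S1 \<beta> \<gamma> \<mu> p) (E2_A \<beta> \<gamma> \<mu> p)"

end

theory Submission
  imports Defs
begin

lemma det2: assumes A: "(A :: 'a :: comm_ring_1 mat) \<in> carrier_mat 2 2"
  shows "det A = A$$(0,0)*A$$(1,1) - A$$(0,1)*A$$(1,0)"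
proof -
  have "det A = (\<Sum>j<2. A $$ (0,j) * cofactor A 0 j)" by (rule laplace_expansion_row[OF A], simp)
  also have "\<dots> = A$$(0,0)*A$$(1,1) - A$$(0,1)*A$$(1,0)"
    using A by (simp add: numeral_2_eq_2 cofactor_def det_single mat_delete_carrier mat_delete_def)
  finally show ?thesis .
qed
lemma det3: assumes A: "(A :: 'a :: comm_ring_1 mat) \<in> carrier_mat 3 3"
  shows "det A = A$$(0,0)*(A$$(1,1)*A$$(2,2) - A$$(1,2)*A$$(2,1))
   - A$$(0,1)*(A$$(1,0)*A$$(2,2) - A$$(1,2)*A$$(2,0))
   + A$$(0,2)*(A$$(1,0)*A$$(2,1) - A$$(1,1)*A$$(2,0))" (is "_ = ?r")
proof -
  have "det A = (\<Sum>j<3. A $$ (0,j) * cofactor A 0 j)" by (rule laplace_expansion_row[OF A], simp)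
  also have "\<dots> = A $$ (0,0) * cofactor A 0 0 + A $$ (0,1) * cofactor A 0 1 + A $$ (0,2) * cofactor A 0 2"
    by (simp add: numeral_3_eq_3 numeral_2_eq_2)
  also have "\<dots> = ?r" using A
    by (simp add: cofactor_def det2 mat_delete_carrier mat_delete_def algebra_simps numeral_2_eq_2)
  finally show ?thesis .
qed


lemma quad_roots:
  fixes u v :: real assumes u: "u > 0" and v: "v > 0"
  shows "\<exists>l2 l3 :: complex. l2 + l3 = - of_real u \<and> l2 * l3 = of_real v \<and> Re l2 < 0 \<and> Re l3 < 0"
proof (cases "u^2 - 4*v \<ge> 0")
  case True
  define d where "d = u^2 - 4*v"
  have d0: "d \<ge> 0" using True d_def by simp
  have sd: "sqrt d ^2 = d" using d0 by simp
  have "sqrt d < u"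
  proof -
    have "d < u^2" using v d_def by simp
    hence "sqrt d < sqrt (u^2)" by (rule real_sqrt_less_mono)
    thus ?thesis using u by simp
  qed
  moreover have sq0: "sqrt d \<ge> 0" using d0 by simp
  moreover have "((-u + sqrt d)/2) * ((-u - sqrt d)/2) = v"
    using sd d_def by (simp add: field_simps power2_eq_square)
  moreover have "complex_of_real ((-u + sqrt d)/2) * complex_of_real ((-u - sqrt d)/2) = complex_of_real v"
    by (metis calculation(3) of_real_mult)
  moreover have "complex_of_real ((-u + sqrt d)/2) + complex_of_real ((-u - sqrt d)/2) = - complex_of_real u"
  proof -
    have "(-u + sqrt d)/2 + (-u - sqrt d)/2 = -u" by (simp add: field_simps)
    thus ?thesis by (metis of_real_add of_real_minus)
  qed
  ultimately show ?thesis
    apply (rule_tac x="of_real ((-u + sqrt d)/2)" in exI)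
    apply (rule_tac x="of_real ((-u - sqrt d)/2)" in exI)
    using u by (simp, insert sq0 u, linarith)
next
  case False
  define d where "d = 4*v - u^2"
  have d0: "d > 0" using False d_def by simp
  have sd: "sqrt d ^2 = d" using d0 by simp
  show ?thesis
    apply (rule_tac x="Complex (-u/2) (sqrt d/2)" in exI)
    apply (rule_tac x="Complex (-u/2) (- sqrt d/2)" in exI)
    using u sd d_def by (simp add: complex_eq_iff power2_eq_square field_simps)
qed

lemma cubic:
  fixes c0 c1 c2 :: real assumes c0: "c0 < 0" and c2: "c2 > 0"
  shows "\<exists>l1 l2 l3::complex. (\<forall>z. z^3 + of_real c2 * z^2 + of_real c1 * z + of_real c0 = (z-l1)*(z-l2)*(z-l3))
     \<and> l1 \<in> \<real> \<and> Re l1 > 0 \<and> Re l2 < 0 \<and> Re l3 < 0"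
proof -
  define q where "q = [:c0,c1,c2,1:]"
  have lc: "lead_coeff q = 1" unfolding q_def by simp
  obtain n where n: "\<forall>x\<ge>n. poly q x \<ge> lead_coeff q" using poly_pinfty_gt_lc[of q] lc by auto
  define b where "b = max n 1"
  have "poly q b \<ge> 1" using n lc b_def by auto
  moreover have "poly q 0 < 0" using c0 q_def by simp
  moreover have "0 < b" using b_def by simp
  ultimately obtain r where r: "0 < r" "r < b" "poly q r = 0"
    using poly_IVT_pos[of 0 b q] by auto
  have req: "c0 + r * (c1 + r * (c2 + r)) = 0" using r(3) q_def by simp
  define u where "u = c2 + r"
  define v where "v = - c0 / r"
  have u: "u > 0" using u_def c2 r by simp
  have v: "v > 0" using v_def c0 r by (simp add: divide_neg_pos)
  have c0e: "c0 = - r * v" using v_def r by simp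
  have "r*(c1 + c2*r + r*r) = r*v" using req c0e by (simp add: algebra_simps)
  hence "c1 + c2*r + r*r = v" using r(1) by simp
  hence c1e: "c1 = v - r * u" using u_def by (simp add: algebra_simps)
  obtain l2 l3 where l: "l2 + l3 = - of_real u" "l2 * l3 = of_real v" "Re l2 < 0" "Re l3 < 0"
    using quad_roots[OF u v] by blast
  show ?thesis
  proof (intro exI conjI allI)
    fix z :: complex
    have "(z - of_real r)*(z-l2)*(z-l3) = (z - of_real r) * (z^2 - (l2+l3)*z + l2*l3)"
      by (simp add: algebra_simps power2_eq_square)
    also have "\<dots> = (z - of_real r) * (z^2 + of_real u * z + of_real v)" using l by simp
    also have "\<dots> = z^3 + of_real c2 * z^2 + of_real c1 * z + of_real c0"
      unfolding c0e c1e u_def by (simp add: algebra_simps power2_eq_square power3_eq_cube)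
    finally show "z^3 + of_real c2 * z^2 + of_real c1 * z + of_real c0 = (z - of_real r)*(z-l2)*(z-l3)" by simp
  qed (use r l in auto)
qed

lemma charpoly3:
  fixes J :: "real mat" assumes J: "J \<in> carrier_mat 3 3"
  shows "poly (char_poly (map_mat complex_of_real J)) z =
    z^3 + of_real (-(J$$(0,0)+J$$(1,1)+J$$(2,2))) * z^2
    + of_real (J$$(0,0)*J$$(1,1) + J$$(0,0)*J$$(2,2) + J$$(1,1)*J$$(2,2) - J$$(0,1)*J$$(1,0) - J$$(0,2)*J$$(2,0) - J$$(1,2)*J$$(2,1)) * z
    + of_real (- det J)"
proof -
  let ?M = "map_mat complex_of_real J"
  have M: "?M \<in> carrier_mat 3 3" using J by simp
  have CM: "char_poly_matrix ?M \<in> carrier_mat 3 3" using M by simp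
  show ?thesis
    unfolding char_poly_def det3[OF CM] det3[OF J]
    using J by (simp add: char_poly_matrix_def algebra_simps power2_eq_square power3_eq_cube)
qed

lemma core:
  fixes \<delta> p s x :: real
  assumes p: "0 < p" "p < 1/2" and d1: "4*(1-p) < \<delta>" and d2: "\<delta> < 1/p"
    and s: "s = sqrt (1 - 4*(1-p)/\<delta>)" and x: "x = (\<delta> - 2 - \<delta>*s)/2"
  shows "0 < x \<and> x < 1 - 2*p \<and> (1+x)^2 = \<delta>*(p+x)"
proof -
  have dpos: "\<delta> > 2" using d1 p by simp
  have dp: "\<delta>*p < 1" using d2 p by (simp add: field_simps)
  have rad: "1 - 4*(1-p)/\<delta> > 0" using d1 dpos by (simp add: field_simps)
  have s0: "s \<ge> 0" unfolding s by (rule real_sqrt_ge_zero[OF less_imp_le[OF rad]])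
  have s2: "s^2 = 1 - 4*(1-p)/\<delta>" using real_sqrt_pow2[OF less_imp_le[OF rad]] s by simp
  have h: "\<delta>*s^2 = \<delta> - 4*(1-p)" using s2 dpos by (simp add: field_simps)
  have "(\<delta>*s)^2 = \<delta>*(\<delta>*s^2)" by (simp add: power2_eq_square)
  also have "\<dots> = \<delta>*(\<delta> - 4*(1-p))" using h by simp
  also have "\<dots> = \<delta>^2 - 4*(1-p)*\<delta>" by (simp add: power2_eq_square algebra_simps)
  finally have ds2: "(\<delta>*s)^2 = \<delta>^2 - 4*(1-p)*\<delta>" .
  have ds0: "\<delta>*s \<ge> 0" using s0 dpos by simp
  have q4: "4*((1+x)^2 - \<delta>*(p+x)) = (\<delta>*s)^2 - (\<delta>^2 - 4*(1-p)*\<delta>)"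
    unfolding x by (simp add: field_simps power2_eq_square)
  have q: "(1+x)^2 = \<delta>*(p+x)" using q4 ds2 by simp
  have "(\<delta>*s)^2 < (\<delta> - 2)^2" using ds2 dp by (simp add: algebra_simps power2_eq_square)
  hence "\<delta>*s < \<delta> - 2" using ds0 dpos by (smt (verit) power_mono)
  hence x0: "x > 0" using x by simp
  have "\<delta> - 4 + 4*p < \<delta>*s"
  proof (cases "\<delta> - 4 + 4*p < 0")
    case True thus ?thesis using ds0 by simp
  next
    case False
    have k: "(4*(1-p))*(4*(1-p)) < \<delta>*(4*(1-p))" using d1 p by (intro mult_strict_right_mono) auto
    have "(\<delta> - 4 + 4*p)^2 < (\<delta>*s)^2" unfolding ds2 using k
      by (simp add: algebra_simps power2_eq_square)
    thus ?thesis using False ds0 by (smt (verit) power_mono)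
  qed
  hence "x < 1 - 2*p" using x by simp
  thus ?thesis using x0 q by simp
qed


lemma detval_y: fixes y \<beta> \<mu> p :: real assumes y: "y > 0"
  shows "(\<mu>*(y-1))*(((1-p)*\<beta>*(1/y) - \<beta>*((1-p)*(y-1)/y^2))*(\<mu>*y)) - \<beta>*(1/y)*(\<mu>*(y-1))*((1-p)*(\<mu>*(y-1))+p*(\<mu>*y))
     = \<beta>*\<mu>^2*(y-1)*(2-2*p-y)/y"
  using y by (simp add: field_simps power2_eq_square)
lemma detval: fixes x \<beta> \<mu> p :: real assumes x: "x > 0"
  shows "(\<mu>*x)*(((1-p)*\<beta>*(1/(x+1)) - \<beta>*((1-p)*x/(x+1)^2))*(\<mu>*x+\<mu>)) - \<beta>*(1/(x+1))*(\<mu>*x)*((1-p)*(\<mu>*x)+p*(\<mu>*x+\<mu>))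
     = \<beta>*\<mu>^2*x*(1-2*p-x)/(1+x)"
  using detval_y[of "x+1" \<mu> p \<beta>] x by (simp add: algebra_simps)

theorem mainTheorem7:
  fixes \<beta> \<gamma> \<mu> p :: real
  assumes "\<beta> > 0" and "\<gamma> > 0" and "\<mu> > 0"
    and "0 < p" and "p < 1/2"
    and "4 * (1 - p) < tam_delta \<beta> \<gamma> \<mu>" and "tam_delta \<beta> \<gamma> \<mu> < 1 / p"
  shows "\<exists>l1 l2 l3 :: complex.
           char_poly (map_mat complex_of_real (J_E2 \<beta> \<gamma> \<mu> p))
             = [:- l1, 1:] * [:- l2, 1:] * [:- l3, 1:]
         \<and> l1 \<in> \<real> \<and> Re l1 > 0 \<and> Re l2 < 0 \<and> Re l3 < 0"
proof -
  note b = assms(1) and g = assms(2) and m = assms(3)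
  define \<delta> where "\<delta> = tam_delta \<beta> \<gamma> \<mu>"
  have \<delta>: "\<delta> = \<beta>/(\<gamma>+\<mu>)" unfolding \<delta>_def tam_delta_def ..
  define s where "s = sqrt (1 - 4*(1-p)/\<delta>)"
  define x where "x = (\<delta> - 2 - \<delta>*s)/2"
  have cx: "0 < x \<and> x < 1 - 2*p \<and> (1+x)^2 = \<delta>*(p+x)"
    by (rule core[OF assms(4,5) _ _ s_def x_def], insert assms(6,7), auto simp: \<delta>_def)
  hence x0: "x > 0" and x1: "x < 1 - 2*p" and xq: "(1+x)^2 = \<delta>*(p+x)" by auto
  define A where "A = E2_A \<beta> \<gamma> \<mu> p"
  have dpos: "\<delta> > 0" unfolding \<delta> using b g m by simp
  have iv1: "\<mu>*\<delta>/\<beta> = \<mu>/(\<gamma>+\<mu>)" unfolding \<delta> using b by simp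
  have iv2: "inverse (1+\<gamma>/\<mu>) = \<mu>/(\<gamma>+\<mu>)" using g m by (simp add: field_simps)
  have iv: "inverse (1+\<gamma>/\<mu>) = \<mu>*\<delta>/\<beta>" using iv1 iv2 by simp
  have A: "A = \<mu>*x/\<beta>" unfolding A_def E2_A_def Let_def \<delta>_def[symmetric] s_def[symmetric] iv
    unfolding x_def using dpos b by (simp add: field_simps)
  have gm: "\<gamma>/\<mu> + 1 = (\<gamma>+\<mu>)/\<mu>" using m by (simp add: field_simps)
  have dg: "\<delta> * (\<gamma>/\<mu> + 1) = \<beta>/\<mu>" unfolding \<delta> gm using g m by simp
  have dA: "\<delta> * (\<gamma>/\<mu> + 1) * A = x" unfolding dg A using b m by simp
  define S0 where "S0 = E2_S0 \<beta> \<gamma> \<mu> p"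
  define S1 where "S1 = E2_S1 \<beta> \<gamma> \<mu> p"
  have S0: "S0 = 1/(x+1)" unfolding S0_def E2_S0_def Let_def \<delta>_def[symmetric] A_def[symmetric] dA ..
  have S1: "S1 = (1-p)*x/(x+1)^2" unfolding S1_def E2_S1_def Let_def \<delta>_def[symmetric] A_def[symmetric]
    using dA by (simp add: mult.assoc)
  have eq0: "\<beta> * (p * S0 + S1) - \<gamma> - \<mu> = 0"
  proof -
    have ne: "x + 1 \<noteq> 0" "1 + x \<noteq> 0" using x0 by auto
    have pp: "p/(x+1) = p*(x+1)/(x+1)^2" using ne(1) by (metis nonzero_mult_divide_mult_cancel_right power2_eq_square)
    have "p * S0 + S1 = (p*(x+1) + (1-p)*x)/(x+1)^2" unfolding S0 S1
      by (simp add: pp add_divide_distrib)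
    also have "\<dots> = (p+x)/(1+x)^2" by (simp add: algebra_simps)
    finally have "p * S0 + S1 = (p+x)/(1+x)^2" .
    also have "\<dots> = 1/\<delta>" unfolding xq using x0 dpos assms(4) by simp
    finally show ?thesis unfolding \<delta> using b g m by simp
  qed
  define J where "J = J_E2 \<beta> \<gamma> \<mu> p"
  have Jdef: "J = mat_of_rows_list 3
     [[- \<beta> * A - \<mu>, 0, - \<beta> * S0],
      [(1 - p) * \<beta> * A, - \<beta> * A - \<mu>, (1 - p) * \<beta> * S0 - \<beta> * S1],
      [p * \<beta> * A, \<beta> * A, 0]]"
    unfolding J_def J_E2_def tam_jacobian_def A_def[symmetric] S0_def[symmetric] S1_def[symmetric] eq0 ..
  define rows where "rows = [[- \<beta> * A - \<mu>, 0, - \<beta> * S0],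
      [(1 - p) * \<beta> * A, - \<beta> * A - \<mu>, (1 - p) * \<beta> * S0 - \<beta> * S1],
      [p * \<beta> * A, \<beta> * A, 0]]"
  have len: "length rows = 3" unfolding rows_def by simp
  have J: "J \<in> carrier_mat 3 3" unfolding Jdef rows_def[symmetric] mat_of_rows_list_def len
    by (rule mat_carrier)
  have ix: "\<And>i j. i < 3 \<Longrightarrow> j < 3 \<Longrightarrow> J$$(i,j) = rows!i!j"
    unfolding Jdef rows_def[symmetric] mat_of_rows_list_def len by simp
  have e: "J$$(0,0) = - \<beta> * A - \<mu>" "J$$(0,1) = 0" "J$$(0,2) = - \<beta> * S0"
     "J$$(1,0) = (1 - p) * \<beta> * A" "J$$(1,1) = - \<beta> * A - \<mu>" "J$$(1,2) = (1 - p) * \<beta> * S0 - \<beta> * S1"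
     "J$$(2,0) = p * \<beta> * A" "J$$(2,1) = \<beta> * A" "J$$(2,2) = 0"
    by (simp_all add: ix rows_def)
  have bA: "\<beta> * A = \<mu> * x" unfolding A using b by simp
  have trv: "-(J$$(0,0)+J$$(1,1)+J$$(2,2)) = 2*(\<beta>*A) + 2*\<mu>" unfolding e by simp
  have tr: "-(J$$(0,0)+J$$(1,1)+J$$(2,2)) > 0" unfolding trv bA using m x0
    by (simp add: add_pos_pos)
  have "det J = (\<mu>*x)*(((1-p)*\<beta>*S0 - \<beta>*S1)*(\<mu>*x+\<mu>)) - \<beta>*S0*(\<mu>*x)*((1-p)*(\<mu>*x)+p*(\<mu>*x+\<mu>))"
    unfolding det3[OF J] e using bA by (simp add: algebra_simps)
  also have "\<dots> = \<beta>*\<mu>^2*x*(1-2*p-x)/(1+x)" unfolding S0 S1 by (rule detval[OF x0])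
  finally have "det J = \<beta>*\<mu>^2*x*(1-2*p-x)/(1+x)" .
  moreover have "\<beta>*\<mu>^2*x*(1-2*p-x)/(1+x) > 0" using b m x0 x1 by simp
  ultimately have dt: "- det J < 0" by simp
  obtain l1 l2 l3 where l: "\<forall>z. z^3 + of_real (-(J$$(0,0)+J$$(1,1)+J$$(2,2))) * z^2
    + of_real (J$$(0,0)*J$$(1,1) + J$$(0,0)*J$$(2,2) + J$$(1,1)*J$$(2,2) - J$$(0,1)*J$$(1,0) - J$$(0,2)*J$$(2,0) - J$$(1,2)*J$$(2,1)) * z
    + of_real (- det J) = (z-l1)*(z-l2)*(z-l3)"
    and r: "l1 \<in> \<real>" "Re l1 > 0" "Re l2 < 0" "Re l3 < 0"
    using cubic[OF dt tr] by blast
  have "poly (char_poly (map_mat complex_of_real J)) = poly ([:- l1, 1:] * [:- l2, 1:] * [:- l3, 1:])"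
  proof
    fix z
    show "poly (char_poly (map_mat complex_of_real J)) z = poly ([:- l1, 1:] * [:- l2, 1:] * [:- l3, 1:]) z"
    proof -
      have "poly (char_poly (map_mat complex_of_real J)) z = (z-l1)*(z-l2)*(z-l3)"
        unfolding charpoly3[OF J] by (rule l[rule_format])
      also have "\<dots> = poly ([:- l1, 1:] * [:- l2, 1:] * [:- l3, 1:]) z" by (simp add: algebra_simps)
      finally show ?thesis .
    qed
  qed
  hence "char_poly (map_mat complex_of_real J) = [:- l1, 1:] * [:- l2, 1:] * [:- l3, 1:]"
    by (simp add: poly_eq_poly_eq_iff)
  thus ?thesis using r unfolding J_def by blast
qed

end
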